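(* Let $R$ be a Noetherian ring, $q\in R^\times$ a central unit, and $(\sigma,\delta)$ a $q$-skew derivation on $R$. Let $N$ be a $\sigma$-ideal of $R$, and suppose there is a positive integer $n$ such that $\delta^n(N^n)=0$ and $\{n!\}_q$ is invertible in $R$. Then $\delta(N)^n\subseteq N$. In particular, if $N$ is the prime radical of $R$, then $\delta(N)\subseteq N$.
   Context: A skew derivation is a pair $(\sigma,\delta)$ with $\sigma$ a ring automorphism and $\delta$ additive with $\delta(ab)=\delta(a)b+\sigma(a)\delta(b)$. It is a $q$-skew derivation if $\delta\sigma=q\sigma\delta$, $\sigma(q)=q$ and $\delta(q)=0$. A $\sigma$-ideal is a two-sided ideal $I$ with $\sigma(I)\subseteq I$. $\{n!\}_q:=(1)(1+q)(1+q+q^2)\cdots(1+q+\cdots+q^{n-1})\in R$. $\delta(N)^n$ denotes the set of all products $\delta(s_1)\cdots\delta(s_n)$ with $s_i\in N$ (and their sums). The prime radical of $R$ is the intersection of all prime ideals of $R$. *)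

theory Defs
  imports Main
begin

definition left_ideal :: "'a::ring_1 set \<Rightarrow> bool" where
  "left_ideal I \<longleftrightarrow> 0 \<in> I \<and> (\<forall>a\<in>I. \<forall>b\<in>I. a + b \<in> I \<and> - a \<in> I) \<and>
     (\<forall>r. \<forall>a\<in>I. r * a \<in> I)"

definition right_ideal :: "'a::ring_1 set \<Rightarrow> bool" where
  "right_ideal I \<longleftrightarrow> 0 \<in> I \<and> (\<forall>a\<in>I. \<forall>b\<in>I. a + b \<in> I \<and> - a \<in> I) \<and>
     (\<forall>r. \<forall>a\<in>I. a * r \<in> I)"

definition two_sided_ideal :: "'a::ring_1 set \<Rightarrow> bool" where
  "two_sided_ideal I \<longleftrightarrow> left_ideal I \<and> right_ideal I"

definition noetherian_ring :: "'a::ring_1 itself \<Rightarrow> bool" where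
  "noetherian_ring _ \<longleftrightarrow>
     (\<forall>I :: nat \<Rightarrow> 'a set. (\<forall>k. left_ideal (I k)) \<and> mono I \<longrightarrow> (\<exists>m. \<forall>k\<ge>m. I k = I m)) \<and>
     (\<forall>I :: nat \<Rightarrow> 'a set. (\<forall>k. right_ideal (I k)) \<and> mono I \<longrightarrow> (\<exists>m. \<forall>k\<ge>m. I k = I m))"

definition ring_unit :: "'a::ring_1 \<Rightarrow> bool" where
  "ring_unit u \<longleftrightarrow> (\<exists>v. u * v = 1 \<and> v * u = 1)"

definition central :: "'a::ring_1 \<Rightarrow> bool" where
  "central c \<longleftrightarrow> (\<forall>a. c * a = a * c)"

definition ring_automorphism :: "('a::ring_1 \<Rightarrow> 'a) \<Rightarrow> bool" where
  "ring_automorphism \<sigma> \<longleftrightarrow> bij \<sigma> \<and> (\<forall>a b. \<sigma> (a + b) = \<sigma> a + \<sigma> b) \<and>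
     (\<forall>a b. \<sigma> (a * b) = \<sigma> a * \<sigma> b) \<and> \<sigma> 1 = 1"

definition skew_derivation :: "('a::ring_1 \<Rightarrow> 'a) \<Rightarrow> ('a \<Rightarrow> 'a) \<Rightarrow> bool" where
  "skew_derivation \<sigma> \<delta> \<longleftrightarrow> ring_automorphism \<sigma> \<and> (\<forall>a b. \<delta> (a + b) = \<delta> a + \<delta> b) \<and>
     (\<forall>a b. \<delta> (a * b) = \<delta> a * b + \<sigma> a * \<delta> b)"

definition q_skew_derivation :: "'a::ring_1 \<Rightarrow> ('a \<Rightarrow> 'a) \<Rightarrow> ('a \<Rightarrow> 'a) \<Rightarrow> bool" where
  "q_skew_derivation q \<sigma> \<delta> \<longleftrightarrow> skew_derivation \<sigma> \<delta> \<and>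
     (\<forall>a. \<delta> (\<sigma> a) = q * \<sigma> (\<delta> a)) \<and> \<sigma> q = q \<and> \<delta> q = 0"

definition sigma_ideal :: "('a::ring_1 \<Rightarrow> 'a) \<Rightarrow> 'a set \<Rightarrow> bool" where
  "sigma_ideal \<sigma> I \<longleftrightarrow> two_sided_ideal I \<and> \<sigma> ` I \<subseteq> I"

inductive_set add_closure :: "'a::ring_1 set \<Rightarrow> 'a set" for S where
  zero: "0 \<in> add_closure S"
| elem: "s \<in> S \<Longrightarrow> s \<in> add_closure S"
| add: "a \<in> add_closure S \<Longrightarrow> b \<in> add_closure S \<Longrightarrow> a + b \<in> add_closure S"

definition ideal_power :: "'a::ring_1 set \<Rightarrow> nat \<Rightarrow> 'a set" where
  "ideal_power N n = add_closure {prod_list xs | xs. length xs = n \<and> set xs \<subseteq> N}"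

definition image_power :: "('a::ring_1 \<Rightarrow> 'a) \<Rightarrow> 'a set \<Rightarrow> nat \<Rightarrow> 'a set" where
  "image_power \<delta> N n = add_closure {prod_list (map \<delta> xs) | xs. length xs = n \<and> set xs \<subseteq> N}"

definition q_factorial :: "'a::ring_1 \<Rightarrow> nat \<Rightarrow> 'a" where
  "q_factorial q n = prod_list (map (\<lambda>i. \<Sum>j<i. q ^ j) [1..<Suc n])"

definition prime_ideal :: "'a::ring_1 set \<Rightarrow> bool" where
  "prime_ideal P \<longleftrightarrow> two_sided_ideal P \<and> P \<noteq> UNIV \<and>
     (\<forall>A B. two_sided_ideal A \<and> two_sided_ideal B \<and> (\<forall>a\<in>A. \<forall>b\<in>B. a * b \<in> P)
        \<longrightarrow> A \<subseteq> P \<or> B \<subseteq> P)"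

definition prime_radical :: "'a::ring_1 set" where
  "prime_radical = \<Inter> {P. prime_ideal P}"

end

theory Submission
  imports Defs
begin

fun tw :: "('a::ring_1 \<Rightarrow> 'a) \<Rightarrow> ('a \<Rightarrow> 'a) \<Rightarrow> 'a list \<Rightarrow> 'a" where
  "tw \<sigma> \<delta> [] = 1"
| "tw \<sigma> \<delta> (x # xs) = (\<sigma> ^^ length xs) (\<delta> x) * tw \<sigma> \<delta> xs"

fun cf :: "'a::ring_1 \<Rightarrow> nat \<Rightarrow> nat \<Rightarrow> 'a" where
  "cf q 0 i = (if i = 0 then 1 else 0)"
| "cf q (Suc m) i = cf q m i + (if i = 0 then 0 else q ^ (Suc m - i) * cf q m (i - 1))"

fun Pw :: "'a::ring_1 set \<Rightarrow> nat \<Rightarrow> 'a set" where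
  "Pw N 0 = UNIV"
| "Pw N (Suc k) = add_closure {a * b | a b. a \<in> N \<and> b \<in> Pw N k}"

lemma lid: "left_ideal I \<Longrightarrow> a \<in> I \<Longrightarrow> r * a \<in> I"
  unfolding left_ideal_def by blast
lemma lid_add: "left_ideal I \<Longrightarrow> a \<in> I \<Longrightarrow> b \<in> I \<Longrightarrow> a + b \<in> I"
  unfolding left_ideal_def by blast
lemma lid_neg: "left_ideal I \<Longrightarrow> a \<in> I \<Longrightarrow> - a \<in> I"
  unfolding left_ideal_def by blast
lemma lid_0: "left_ideal I \<Longrightarrow> 0 \<in> I"
  unfolding left_ideal_def by blast
lemma lid_diff: "left_ideal I \<Longrightarrow> a \<in> I \<Longrightarrow> b \<in> I \<Longrightarrow> a - b \<in> I"
  using lid_add lid_neg by (metis diff_conv_add_uminus)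
lemma tid_r: "two_sided_ideal I \<Longrightarrow> a \<in> I \<Longrightarrow> a * r \<in> I"
  unfolding two_sided_ideal_def right_ideal_def by blast
lemma tid_l: "two_sided_ideal I \<Longrightarrow> left_ideal I"
  unfolding two_sided_ideal_def by blast

lemma lid_sum: "left_ideal I \<Longrightarrow> (\<And>i. i < k \<Longrightarrow> f i \<in> I) \<Longrightarrow> (\<Sum>i<(k::nat). f i) \<in> I"
  by (induction k) (auto intro: lid_0 lid_add)

lemma Pw_0: "0 \<in> Pw N k"
  by (cases k) (auto intro: add_closure.zero)
lemma Pw_add: "x \<in> Pw N k \<Longrightarrow> y \<in> Pw N k \<Longrightarrow> x + y \<in> Pw N k"
  by (cases k) (auto intro: add_closure.add)
lemma Pw_lmult:
  assumes N: "left_ideal N" and y: "y \<in> Pw N k"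
  shows "r * y \<in> Pw N k"
proof (cases k)
  case 0 then show ?thesis by simp
next
  case (Suc j)
  have "y \<in> add_closure {a * b | a b. a \<in> N \<and> b \<in> Pw N j}" using y Suc by simp
  then have "r * y \<in> add_closure {a * b | a b. a \<in> N \<and> b \<in> Pw N j}"
  proof (induction rule: add_closure.induct)
    case zero then show ?case by (simp add: add_closure.zero)
  next
    case (elem s)
    then obtain a b where ab: "s = a * b" "a \<in> N" "b \<in> Pw N j" by blast
    have "r * s = (r * a) * b" using ab by (simp add: mult.assoc)
    moreover have "r * a \<in> N" using N ab lid by blast
    ultimately show ?case using ab by (auto intro!: add_closure.elem)
  next
    case (add x y)
    then show ?case by (simp add: distrib_left add_closure.add)
  qed
  then show ?thesis using Suc by simp
qed
lemma Pw_sub: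
  assumes N: "two_sided_ideal N" and y: "y \<in> Pw N (Suc k)"
  shows "y \<in> N"
proof -
  have "y \<in> add_closure {a * b | a b. a \<in> N \<and> b \<in> Pw N k}" using y by simp
  then show ?thesis
  proof (induction rule: add_closure.induct)
    case zero then show ?case using N tid_l lid_0 by blast
  next
    case (elem s) then show ?case using N tid_r by blast
  next
    case (add x y) then show ?case using N tid_l lid_add by blast
  qed
qed
lemma prod_Pw: "set xs \<subseteq> N \<Longrightarrow> prod_list xs \<in> Pw N (length xs)"
  by (induction xs) (auto intro!: add_closure.elem)

lemma ideal_intro:
  assumes "0 \<in> X" "\<And>a b. a \<in> X \<Longrightarrow> b \<in> X \<Longrightarrow> a + b \<in> X" "\<And>a. a \<in> X \<Longrightarrow> - a \<in> X"
    "\<And>a r. a \<in> X \<Longrightarrow> r * a \<in> X" "\<And>a r. a \<in> X \<Longrightarrow> a * r \<in> X"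
  shows "two_sided_ideal X"
  unfolding two_sided_ideal_def left_ideal_def right_ideal_def
  using assms by simp

lemma ann_ideal:
  assumes P: "two_sided_ideal P"
  shows "two_sided_ideal {y. \<forall>z\<in>S. \<forall>r. y * r * z \<in> P}"
proof -
  have l: "left_ideal P" using P tid_l by blast
  show ?thesis
  proof (rule ideal_intro)
    show "0 \<in> {y. \<forall>z\<in>S. \<forall>r. y * r * z \<in> P}" using lid_0[OF l] by simp
  next
    fix a b assume a: "a \<in> {y. \<forall>z\<in>S. \<forall>r. y * r * z \<in> P}" and b: "b \<in> {y. \<forall>z\<in>S. \<forall>r. y * r * z \<in> P}"
    show "a + b \<in> {y. \<forall>z\<in>S. \<forall>r. y * r * z \<in> P}" using a b lid_add[OF l] by (simp add: distrib_right)
  next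
    fix a assume a: "a \<in> {y. \<forall>z\<in>S. \<forall>r. y * r * z \<in> P}"
    show "- a \<in> {y. \<forall>z\<in>S. \<forall>r. y * r * z \<in> P}" using a lid_neg[OF l] by simp
  next
    fix r' a assume a: "a \<in> {y. \<forall>z\<in>S. \<forall>r. y * r * z \<in> P}"
    show "r' * a \<in> {y. \<forall>z\<in>S. \<forall>r. y * r * z \<in> P}" using a lid[OF l] by (simp add: mult.assoc)
  next
    fix r' a assume a: "a \<in> {y. \<forall>z\<in>S. \<forall>r. y * r * z \<in> P}"
    show "a * r' \<in> {y. \<forall>z\<in>S. \<forall>r. y * r * z \<in> P}"
    proof (intro CollectI ballI allI)
      fix z r assume "z \<in> S"
      then have "a * (r' * r) * z \<in> P" using a by blast
      then show "a * r' * r * z \<in> P" by (simp add: mult.assoc)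
    qed
  qed
qed

lemma ann_ideal2:
  assumes P: "two_sided_ideal P"
  shows "two_sided_ideal {z. \<forall>y\<in>S. \<forall>r. y * r * z \<in> P}"
proof -
  have l: "left_ideal P" using P tid_l by blast
  show ?thesis
  proof (rule ideal_intro)
    show "0 \<in> {z. \<forall>y\<in>S. \<forall>r. y * r * z \<in> P}" using lid_0[OF l] by simp
  next
    fix a b assume a: "a \<in> {z. \<forall>y\<in>S. \<forall>r. y * r * z \<in> P}" and b: "b \<in> {z. \<forall>y\<in>S. \<forall>r. y * r * z \<in> P}"
    show "a + b \<in> {z. \<forall>y\<in>S. \<forall>r. y * r * z \<in> P}" using a b lid_add[OF l] by (simp add: distrib_left)
  next
    fix a assume a: "a \<in> {z. \<forall>y\<in>S. \<forall>r. y * r * z \<in> P}"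
    show "- a \<in> {z. \<forall>y\<in>S. \<forall>r. y * r * z \<in> P}" using a lid_neg[OF l] by simp
  next
    fix r' a assume a: "a \<in> {z. \<forall>y\<in>S. \<forall>r. y * r * z \<in> P}"
    show "r' * a \<in> {z. \<forall>y\<in>S. \<forall>r. y * r * z \<in> P}"
    proof (intro CollectI ballI allI)
      fix y r assume "y \<in> S"
      then have "y * (r * r') * a \<in> P" using a by blast
      then show "y * r * (r' * a) \<in> P" by (simp add: mult.assoc)
    qed
  next
    fix r' a assume a: "a \<in> {z. \<forall>y\<in>S. \<forall>r. y * r * z \<in> P}"
    show "a * r' \<in> {z. \<forall>y\<in>S. \<forall>r. y * r * z \<in> P}"
    proof (intro CollectI ballI allI)
      fix y r assume "y \<in> S"
      then have "y * r * a \<in> P" using a by blast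
      then have "y * r * a * r' \<in> P" using P tid_r by blast
      then show "y * r * (a * r') \<in> P" by (simp add: mult.assoc)
    qed
  qed
qed

locale qsd =
  fixes q :: "'a::ring_1" and \<sigma> \<delta> :: "'a \<Rightarrow> 'a"
  assumes sbij: "bij \<sigma>" and sadd: "\<sigma> (a + b) = \<sigma> a + \<sigma> b" and smult: "\<sigma> (a * b) = \<sigma> a * \<sigma> b"
    and s1: "\<sigma> 1 = 1"
    and dadd: "\<delta> (a + b) = \<delta> a + \<delta> b" and dmult: "\<delta> (a * b) = \<delta> a * b + \<sigma> a * \<delta> b"
    and ds: "\<delta> (\<sigma> a) = q * \<sigma> (\<delta> a)" and sq: "\<sigma> q = q" and dq: "\<delta> q = 0"
    and cq: "q * a = a * q"
begin

lemma s0: "\<sigma> 0 = 0"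
  using sadd[of 0 0] by simp
lemma sneg: "\<sigma> (- a) = - \<sigma> a"
proof -
  have "\<sigma> a + \<sigma> (- a) = 0" using sadd[of a "- a", symmetric] s0 by simp
  then show ?thesis by (rule minus_unique[symmetric])
qed
lemma sdiff: "\<sigma> (a - b) = \<sigma> a - \<sigma> b"
  by (simp only: diff_conv_add_uminus sadd sneg)
lemma d0: "\<delta> 0 = 0"
  using dadd[of 0 0] by simp
lemma dneg: "\<delta> (- a) = - \<delta> a"
proof -
  have "\<delta> a + \<delta> (- a) = 0" using dadd[of a "- a", symmetric] d0 by simp
  then show ?thesis by (rule minus_unique[symmetric])
qed
lemma ddiff: "\<delta> (a - b) = \<delta> a - \<delta> b"
  by (simp only: diff_conv_add_uminus dadd dneg)
lemma d1: "\<delta> 1 = 0"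
  using dmult[of 1 1] s1 by simp

lemma d_sum: "\<delta> (sum f A) = (\<Sum>i\<in>A. \<delta> (f i))"
proof (cases "finite A")
  case True then show ?thesis by (induction A rule: finite_induct) (auto simp: d0 dadd)
next
  case False then show ?thesis by (simp add: d0)
qed

lemma spow_add: "(\<sigma>^^k) (a + b) = (\<sigma>^^k) a + (\<sigma>^^k) b"
  by (induction k) (auto simp: sadd)
lemma spow_mult: "(\<sigma>^^k) (a * b) = (\<sigma>^^k) a * (\<sigma>^^k) b"
  by (induction k) (auto simp: smult)
lemma spow_0: "(\<sigma>^^k) 0 = 0"
  by (induction k) (auto simp: s0)
lemma spow_neg: "(\<sigma>^^k) (- a) = - (\<sigma>^^k) a"
  by (induction k) (auto simp: sneg)
lemma spow_surj: "\<exists>x. (\<sigma>^^k) x = y"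
proof (induction k arbitrary: y)
  case 0 then show ?case by simp
next
  case (Suc k)
  obtain x where "(\<sigma>^^k) x = y" using Suc by blast
  moreover obtain z where "\<sigma> z = x" using sbij by (metis bij_pointE)
  ultimately show ?case by (metis funpow_Suc_right o_apply)
qed

definition good :: "'a \<Rightarrow> bool" where
  "good z \<longleftrightarrow> \<sigma> z = z \<and> \<delta> z = 0 \<and> (\<forall>a. z * a = a * z)"

lemma good_0: "good 0" by (simp add: good_def s0 d0)
lemma good_1: "good 1" by (simp add: good_def s1 d1)
lemma good_q: "good q" by (simp add: good_def sq dq cq)
lemma good_add: "good x \<Longrightarrow> good y \<Longrightarrow> good (x + y)"
  unfolding good_def
proof (intro conjI allI)
  fix a assume h: "\<sigma> x = x \<and> \<delta> x = 0 \<and> (\<forall>a. x * a = a * x)" "\<sigma> y = y \<and> \<delta> y = 0 \<and> (\<forall>a. y * a = a * y)"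
  have e: "\<sigma> x = x" "\<sigma> y = y" "\<delta> x = 0" "\<delta> y = 0" using h by blast+
  show "\<sigma> (x + y) = x + y" using e by (simp add: sadd)
  show "\<delta> (x + y) = 0" using e by (simp add: dadd)
  have "x * a = a * x" "y * a = a * y" using h by blast+
  then show "(x + y) * a = a * (x + y)" by (simp only: distrib_left distrib_right)
qed
lemma good_mult: "good x \<Longrightarrow> good y \<Longrightarrow> good (x * y)"
  unfolding good_def
proof (intro conjI allI)
  fix a assume h: "\<sigma> x = x \<and> \<delta> x = 0 \<and> (\<forall>a. x * a = a * x)" "\<sigma> y = y \<and> \<delta> y = 0 \<and> (\<forall>a. y * a = a * y)"
  have e: "\<sigma> x = x" "\<sigma> y = y" "\<delta> x = 0" "\<delta> y = 0" using h by blast+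
  show "\<sigma> (x * y) = x * y" using e by (simp add: smult)
  show "\<delta> (x * y) = 0" using e by (simp add: dmult)
  have "x * a = a * x" "y * a = a * y" using h by blast+
  then show "(x * y) * a = a * (x * y)" by (metis mult.assoc)
qed
lemma good_pow: "good x \<Longrightarrow> good (x ^ k)"
  by (induction k) (auto simp: good_1 good_mult)
lemma good_sum: "(\<And>i. good (f i)) \<Longrightarrow> good (\<Sum>i<(k::nat). f i)"
  by (induction k) (auto simp: good_0 good_add)
lemma good_prod_list: "(\<And>x. x \<in> set xs \<Longrightarrow> good x) \<Longrightarrow> good (prod_list xs)"
  by (induction xs) (auto simp: good_1 good_mult)
lemma good_qf: "good (q_factorial q n)"
  unfolding q_factorial_def by (rule good_prod_list) (auto intro!: good_sum good_pow good_q)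
lemma good_cf: "good (cf q m i)"
  by (induction m arbitrary: i) (auto simp: good_0 good_1 intro!: good_add good_mult good_pow good_q)
lemma good_spow: "good c \<Longrightarrow> (\<sigma>^^k) c = c"
  by (induction k) (auto simp: good_def)

lemma ds_pow: "\<delta> ((\<sigma>^^j) x) = q^j * (\<sigma>^^j) (\<delta> x)"
proof (induction j)
  case 0 then show ?case by simp
next
  case (Suc j)
  have "\<delta> ((\<sigma>^^Suc j) x) = q * \<sigma> (q^j * (\<sigma>^^j) (\<delta> x))" by (simp add: ds Suc)
  also have "\<dots> = q * (q^j * (\<sigma>^^Suc j) (\<delta> x))"
    using good_pow[OF good_q, of j] by (simp add: smult good_def)
  finally show ?case by (simp add: mult.assoc)
qed

lemma cf_big: "m < i \<Longrightarrow> cf q m i = 0"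
  by (induction m arbitrary: i) auto
lemma cf_diag: "cf q m m = 1"
  by (induction m) (auto simp: cf_big)
lemma cf_sub: "cf q (Suc m) m = (\<Sum>j<Suc m. q^j)"
proof (induction m)
  case 0 then show ?case by simp
next
  case (Suc m)
  have "cf q (Suc (Suc m)) (Suc m) = 1 + q * (\<Sum>j<Suc m. q^j)"
    by (subst cf.simps(2)) (simp add: cf_diag Suc del: cf.simps)
  also have "\<dots> = (\<Sum>j<Suc (Suc m). q^j)"
  proof -
    have "q * (\<Sum>j<Suc m. q^j) = (\<Sum>j<Suc m. q^(Suc j))"
      by (simp only: sum_distrib_left power_Suc)
    then show ?thesis by (simp only: sum.lessThan_Suc_shift[of "\<lambda>j. q^j" "Suc m"] power_0)
  qed
  finally show ?case .
qed

lemma leibniz: "(\<delta>^^m) (a*b) = (\<Sum>i\<le>m. cf q m i * (\<sigma>^^(m-i)) ((\<delta>^^i) a) * (\<delta>^^(m-i)) b)"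
proof (induction m)
  case 0 then show ?case by simp
next
  case (Suc m)
  define T where "T i = (\<sigma>^^(Suc m - i)) ((\<delta>^^i) a) * (\<delta>^^(Suc m - i)) b" for i
  have step: "\<delta> (cf q m i * (\<sigma>^^(m-i)) ((\<delta>^^i) a) * (\<delta>^^(m-i)) b)
      = q^(Suc m - Suc i) * cf q m i * T (Suc i) + cf q m i * T i" if "i \<le> m" for i
  proof -
    have g: "good (cf q m i)" by (rule good_cf)
    define X where "X = (\<sigma>^^(m-i)) ((\<delta>^^i) a)"
    define Y where "Y = (\<delta>^^(m-i)) b"
    have "\<delta> (cf q m i * X * Y) = cf q m i * \<delta> X * Y + cf q m i * (\<sigma> X * \<delta> Y)"
      using g by (simp add: dmult smult good_def mult.assoc)
    moreover have "\<delta> X = q^(m-i) * (\<sigma>^^(m-i)) ((\<delta>^^Suc i) a)"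
      unfolding X_def by (simp add: ds_pow)
    moreover have "\<sigma> X * \<delta> Y = T i"
      unfolding X_def Y_def T_def using that by (simp add: Suc_diff_le)
    moreover have "T (Suc i) = (\<sigma>^^(m-i)) ((\<delta>^^Suc i) a) * Y"
      unfolding T_def Y_def by simp
    moreover have "cf q m i * q^(m-i) = q^(m-i) * cf q m i"
      using g by (simp add: good_def)
    ultimately show ?thesis unfolding X_def Y_def
      by (simp add: mult.assoc) (metis mult.assoc)
  qed
  have "(\<delta>^^Suc m) (a*b) = (\<Sum>i\<le>m. \<delta> (cf q m i * (\<sigma>^^(m-i)) ((\<delta>^^i) a) * (\<delta>^^(m-i)) b))"
    by (simp add: Suc d_sum)
  also have "\<dots> = (\<Sum>i\<le>m. q^(Suc m - Suc i) * cf q m i * T (Suc i) + cf q m i * T i)"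
    by (rule sum.cong) (auto simp: step)
  also have "\<dots> = (\<Sum>i\<le>m. q^(Suc m - Suc i) * cf q m i * T (Suc i)) + (\<Sum>i\<le>m. cf q m i * T i)"
    by (simp add: sum.distrib)
  finally have L: "(\<delta>^^Suc m) (a*b) = (\<Sum>i\<le>m. q^(Suc m - Suc i) * cf q m i * T (Suc i)) + (\<Sum>i\<le>m. cf q m i * T i)" .
  have "(\<Sum>i\<le>Suc m. cf q (Suc m) i * (\<sigma>^^(Suc m-i)) ((\<delta>^^i) a) * (\<delta>^^(Suc m-i)) b)
      = (\<Sum>i\<le>Suc m. cf q m i * T i + (if i = 0 then 0 else q ^ (Suc m - i) * cf q m (i - 1)) * T i)"
    by (rule sum.cong) (auto simp: T_def mult.assoc distrib_right)
  also have "\<dots> = (\<Sum>i\<le>Suc m. cf q m i * T i) + (\<Sum>i\<le>Suc m. (if i = 0 then 0 else q ^ (Suc m - i) * cf q m (i - 1)) * T i)"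
    by (simp add: sum.distrib)
  also have "(\<Sum>i\<le>Suc m. cf q m i * T i) = (\<Sum>i\<le>m. cf q m i * T i)"
    by (simp add: cf_big)
  also have "(\<Sum>i\<le>Suc m. (if i = 0 then 0 else q ^ (Suc m - i) * cf q m (i - 1)) * T i)
      = (\<Sum>i\<le>m. q^(Suc m - Suc i) * cf q m i * T (Suc i))"
    by (subst sum.atMost_Suc_shift) simp
  finally show ?case using L by (simp add: add.commute)
qed


lemma dPw:
  assumes N: "left_ideal N" and sN: "\<sigma> ` N \<subseteq> N"
  shows "y \<in> Pw N (Suc k) \<Longrightarrow> \<delta> y \<in> Pw N k"
proof (induction k arbitrary: y)
  case 0 then show ?case by simp
next
  case (Suc k)
  from Suc.prems have "y \<in> add_closure {a * b | a b. a \<in> N \<and> b \<in> Pw N (Suc k)}" by simp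
  then show ?case
  proof (induction rule: add_closure.induct)
    case zero then show ?case using Pw_0[of N "Suc k"] by (simp only: d0)
  next
    case (elem s)
    then obtain a b where ab: "s = a * b" "a \<in> N" "b \<in> Pw N (Suc k)" by blast
    have 1: "\<delta> a * b \<in> Pw N (Suc k)" using Pw_lmult[OF N ab(3)] by blast
    have "\<delta> b \<in> Pw N k" using Suc.IH ab(3) by blast
    moreover have "\<sigma> a \<in> N" using sN ab(2) by blast
    ultimately have 2: "\<sigma> a * \<delta> b \<in> Pw N (Suc k)" by (auto intro!: add_closure.elem)
    have "\<delta> s = \<delta> a * b + \<sigma> a * \<delta> b" using ab(1) dmult by simp
    then show ?case using Pw_add[OF 1 2] by simp
  next
    case (add x y)
    then have "\<delta> x \<in> Pw N (Suc k)" "\<delta> y \<in> Pw N (Suc k)" by blast+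
    then show ?case unfolding dadd by (rule Pw_add)
  qed
qed

lemma dpowPw:
  assumes N: "left_ideal N" and sN: "\<sigma> ` N \<subseteq> N" and y: "y \<in> Pw N k"
  shows "(\<delta>^^i) y \<in> Pw N (k - i)"
proof (induction i)
  case 0 then show ?case using y by simp
next
  case (Suc i)
  show ?case
  proof (cases "k - i")
    case 0 then show ?thesis by simp
  next
    case (Suc j)
    then have "k - Suc i = j" by simp
    then show ?thesis using dPw[OF N sN] Suc.IH \<open>k - i = Suc j\<close> by simp
  qed
qed

lemma spowN: "\<sigma> ` N \<subseteq> N \<Longrightarrow> x \<in> N \<Longrightarrow> (\<sigma>^^k) x \<in> N"
  by (induction k) auto

lemma sigma_onto:
  assumes noe: "noetherian_ring TYPE('a)" and N: "left_ideal N" and sN: "\<sigma> ` N \<subseteq> N" and t: "t \<in> N"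
  shows "\<exists>x\<in>N. \<sigma> x = t"
proof -
  define I where "I k = {x. (\<sigma>^^k) x \<in> N}" for k
  have li: "left_ideal (I k)" for k
    unfolding left_ideal_def
  proof (intro conjI ballI allI)
    show "0 \<in> I k" using lid_0[OF N] by (simp add: I_def spow_0)
  next
    fix a b assume "a \<in> I k" "b \<in> I k"
    then show "a + b \<in> I k" using lid_add[OF N] by (simp add: I_def spow_add)
  next
    fix a b assume "a \<in> I k"
    then show "- a \<in> I k" using lid_neg[OF N] by (simp add: I_def spow_neg)
  next
    fix r a assume "a \<in> I k"
    then show "r * a \<in> I k" using lid[OF N] by (simp add: I_def spow_mult)
  qed
  have mo: "mono I"
    unfolding mono_iff_le_Suc
  proof (intro allI subsetI)
    fix k x assume "x \<in> I k"
    then show "x \<in> I (Suc k)" using sN by (auto simp: I_def)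
  qed
  have "\<forall>I :: nat \<Rightarrow> 'a set. (\<forall>k. left_ideal (I k)) \<and> mono I \<longrightarrow> (\<exists>m. \<forall>k\<ge>m. I k = I m)"
    using noe unfolding noetherian_ring_def by (rule conjunct1)
  then obtain m where m: "\<forall>k\<ge>m. I k = I m"
    using li mo by blast
  obtain w where w: "(\<sigma>^^Suc m) w = t" using spow_surj by blast
  then have "w \<in> I (Suc m)" using t by (simp add: I_def)
  moreover have "I (Suc m) = I m" using m[rule_format, of "Suc m"] by linarith
  ultimately have "w \<in> I m" by simp
  then show ?thesis using w by (auto simp: I_def)
qed

lemma spow_onto:
  assumes on: "\<forall>t\<in>N. \<exists>x\<in>N. \<sigma> x = t"
  shows "t \<in> N \<Longrightarrow> \<exists>x\<in>N. (\<sigma>^^k) x = t"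
proof (induction k arbitrary: t)
  case 0 then show ?case by auto
next
  case (Suc k)
  then obtain x where x: "x \<in> N" "(\<sigma>^^k) x = t" by blast
  then obtain y where "y \<in> N" "\<sigma> y = x" using on by blast
  then show ?case using x by (metis funpow_Suc_right o_apply)
qed

lemma tw_snoc: "tw \<sigma> \<delta> (xs @ [b]) = \<sigma> (tw \<sigma> \<delta> xs) * \<delta> b"
  by (induction xs) (simp_all add: s1 smult mult.assoc)

lemma main:
  assumes N: "two_sided_ideal N" and sN: "\<sigma> ` N \<subseteq> N"
  shows "set xs \<subseteq> N \<Longrightarrow> (\<delta>^^length xs) (prod_list xs) - q_factorial q (length xs) * tw \<sigma> \<delta> xs \<in> N"
proof (induction xs rule: rev_induct)
  case Nil
  then show ?case using lid_0[OF tid_l[OF N]] by (simp add: q_factorial_def)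
next
  case (snoc x xs)
  have l: "left_ideal N" using N tid_l by blast
  define a where "a = prod_list xs"
  define k where "k = length xs"
  define T where "T i = cf q (Suc k) i * (\<sigma>^^(Suc k - i)) ((\<delta>^^i) a) * (\<delta>^^(Suc k - i)) x" for i
  define Q where "Q = (\<Sum>j<Suc k. q^j)"
  define F where "F = q_factorial q k"
  have xN: "x \<in> N" and xsN: "set xs \<subseteq> N" using snoc.prems by auto
  have "(\<delta>^^Suc k) (a*x) = (\<Sum>i\<le>Suc k. T i)" unfolding T_def by (rule leibniz)
  also have "\<dots> = (\<Sum>i<k. T i) + T k + T (Suc k)"
    by (simp only: lessThan_Suc_atMost[symmetric] sum.lessThan_Suc)
  finally have E1: "(\<delta>^^Suc k) (a*x) = (\<Sum>i<k. T i) + T k + T (Suc k)" .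
  have A: "(\<Sum>i<k. T i) \<in> N"
  proof (rule lid_sum[OF l])
    fix i assume i: "i < k"
    have "a \<in> Pw N k" using prod_Pw[OF xsN] by (simp add: a_def k_def)
    then have "(\<delta>^^i) a \<in> Pw N (k - i)" using dpowPw[OF l sN] by blast
    moreover have "k - i = Suc (k - i - 1)" using i by simp
    ultimately have "(\<delta>^^i) a \<in> N" using Pw_sub[OF N] by metis
    then have "(\<sigma>^^(Suc k - i)) ((\<delta>^^i) a) \<in> N" using spowN[OF sN] by blast
    then show "T i \<in> N" unfolding T_def using lid[OF l] tid_r[OF N] by blast
  qed
  have B: "T (Suc k) \<in> N" unfolding T_def using xN lid[OF l] by simp
  have cQ: "cf q (Suc k) k = Q" unfolding Q_def by (rule cf_sub)
  have C: "T k = Q * \<sigma> ((\<delta>^^k) a) * \<delta> x" unfolding T_def by (simp add: cQ del: cf.simps)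
  have qf: "q_factorial q (Suc k) = F * Q" by (simp add: q_factorial_def F_def Q_def)
  have gQ: "good Q" unfolding Q_def by (intro good_sum good_pow good_q)
  have gF: "good F" unfolding F_def by (rule good_qf)
  have D: "q_factorial q (Suc k) * tw \<sigma> \<delta> (xs @ [x]) = Q * \<sigma> (F * tw \<sigma> \<delta> xs) * \<delta> x"
  proof -
    have "F * Q = Q * F" using gF by (simp add: good_def)
    moreover have "\<sigma> F = F" using gF by (simp add: good_def)
    ultimately show ?thesis by (simp add: qf tw_snoc smult mult.assoc)
  qed
  have IH: "(\<delta>^^k) a - F * tw \<sigma> \<delta> xs \<in> N" using snoc.IH xsN by (simp add: a_def k_def F_def)
  have E: "T k - q_factorial q (Suc k) * tw \<sigma> \<delta> (xs @ [x]) = Q * \<sigma> ((\<delta>^^k) a - F * tw \<sigma> \<delta> xs) * \<delta> x"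
    unfolding C D sdiff by (simp add: left_diff_distrib right_diff_distrib)
  have EN: "T k - q_factorial q (Suc k) * tw \<sigma> \<delta> (xs @ [x]) \<in> N"
    unfolding E using IH sN lid[OF l] tid_r[OF N] by blast
  have "(\<delta>^^Suc k) (a*x) - q_factorial q (Suc k) * tw \<sigma> \<delta> (xs @ [x])
      = ((\<Sum>i<k. T i) + T (Suc k)) + (T k - q_factorial q (Suc k) * tw \<sigma> \<delta> (xs @ [x]))"
    unfolding E1 by (simp add: algebra_simps)
  also have "\<dots> \<in> N" using A B EN lid_add[OF l] by blast
  finally show ?case by (simp add: a_def k_def)
qed

lemma reach:
  assumes on: "\<forall>t\<in>N. \<exists>x\<in>N. \<sigma> x = t"
  shows "set ts \<subseteq> N \<Longrightarrow> \<exists>xs e. set xs \<subseteq> N \<and> length xs = length ts \<and> prod_list (map \<delta> ts) = q^e * tw \<sigma> \<delta> xs"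
proof (induction ts)
  case Nil
  show ?case by (rule exI[of _ "[]"], rule exI[of _ 0]) simp
next
  case (Cons t ts)
  then obtain xs e where xs: "set xs \<subseteq> N" "length xs = length ts" "prod_list (map \<delta> ts) = q^e * tw \<sigma> \<delta> xs"
    by auto
  define k where "k = length xs"
  have tN: "t \<in> N" using Cons.prems by simp
  obtain x where x: "x \<in> N" "(\<sigma>^^k) x = t" using spow_onto[OF on tN] by blast
  have dt: "\<delta> t = q^k * (\<sigma>^^k) (\<delta> x)" using x ds_pow by blast
  have ce: "(\<sigma>^^k) (\<delta> x) * q^e = q^e * (\<sigma>^^k) (\<delta> x)"
    using good_pow[OF good_q, of e] by (simp add: good_def)
  have "prod_list (map \<delta> (t # ts)) = q^k * (\<sigma>^^k) (\<delta> x) * (q^e * tw \<sigma> \<delta> xs)"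
    using xs dt by simp
  also have "\<dots> = q^k * ((\<sigma>^^k) (\<delta> x) * q^e) * tw \<sigma> \<delta> xs" by (simp add: mult.assoc)
  also have "\<dots> = q^(k+e) * tw \<sigma> \<delta> (x # xs)"
    unfolding ce by (simp add: mult.assoc power_add k_def)
  finally show ?case using xs x by (intro exI[of _ "x # xs"] exI[of _ "k + e"]) simp
qed

lemma image_part:
  assumes N: "two_sided_ideal N" and sN: "\<sigma> ` N \<subseteq> N" and on: "\<forall>t\<in>N. \<exists>x\<in>N. \<sigma> x = t"
    and vanish: "\<forall>x \<in> ideal_power N n. (\<delta> ^^ n) x = 0"
    and unit: "ring_unit (q_factorial q n)"
  shows "image_power \<delta> N n \<subseteq> N"
proof -
  have l: "left_ideal N" using N tid_l by blast
  obtain v where v: "v * q_factorial q n = 1" using unit unfolding ring_unit_def by blast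
  have twN: "tw \<sigma> \<delta> xs \<in> N" if xs: "set xs \<subseteq> N" "length xs = n" for xs
  proof -
    have "prod_list xs \<in> ideal_power N n" unfolding ideal_power_def
      using xs by (auto intro!: add_closure.elem)
    then have "(\<delta>^^n) (prod_list xs) = 0" using vanish by blast
    then have "- (q_factorial q n * tw \<sigma> \<delta> xs) \<in> N" using main[OF N sN xs(1)] xs(2) by simp
    then have "q_factorial q n * tw \<sigma> \<delta> xs \<in> N" using lid_neg[OF l] by fastforce
    then have "v * (q_factorial q n * tw \<sigma> \<delta> xs) \<in> N" using lid[OF l] by blast
    then show ?thesis using v by (simp add: mult.assoc[symmetric])
  qed
  show ?thesis
  proof
    fix y assume "y \<in> image_power \<delta> N n"
    then have "y \<in> add_closure {prod_list (map \<delta> xs) | xs. length xs = n \<and> set xs \<subseteq> N}"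
      by (simp add: image_power_def)
    then show "y \<in> N"
    proof (induction rule: add_closure.induct)
      case zero then show ?case using lid_0[OF l] .
    next
      case (elem s)
      then obtain ts where ts: "s = prod_list (map \<delta> ts)" "length ts = n" "set ts \<subseteq> N" by blast
      obtain xs e where xs: "set xs \<subseteq> N" "length xs = length ts" "prod_list (map \<delta> ts) = q^e * tw \<sigma> \<delta> xs"
        using reach[OF on ts(3)] by blast
      show ?case using ts xs twN lid[OF l] by simp
    next
      case (add x y) then show ?case using lid_add[OF l] by blast
    qed
  qed
qed

lemma prime_part:
  assumes N: "two_sided_ideal N" and IP: "image_power \<delta> N n \<subseteq> N"
    and P: "prime_ideal P" and NP: "N \<subseteq> P"
  shows "\<delta> ` N \<subseteq> P"
proof -
  have tP: "two_sided_ideal P" and PU: "P \<noteq> UNIV"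
    and pr: "\<And>A B. two_sided_ideal A \<Longrightarrow> two_sided_ideal B \<Longrightarrow> (\<forall>a\<in>A. \<forall>b\<in>B. a * b \<in> P) \<Longrightarrow> A \<subseteq> P \<or> B \<subseteq> P"
    using P unfolding prime_ideal_def by blast+
  have lP: "left_ideal P" using tP tid_l by blast
  have l: "left_ideal N" using N tid_l by blast
  define A where "A = {y. \<forall>z\<in>\<delta> ` N. \<forall>r. y * r * z \<in> P}"
  define B where "B = {z. \<forall>y\<in>A. \<forall>r. y * r * z \<in> P}"
  have tA: "two_sided_ideal A" unfolding A_def by (rule ann_ideal[OF tP])
  have tB: "two_sided_ideal B" unfolding B_def by (rule ann_ideal2[OF tP])
  have AB: "\<forall>a\<in>A. \<forall>b\<in>B. a * b \<in> P"
  proof (intro ballI)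
    fix a b assume "a \<in> A" "b \<in> B"
    then have "a * 1 * b \<in> P" unfolding B_def by blast
    then show "a * b \<in> P" by simp
  qed
  have dB: "\<delta> ` N \<subseteq> B" unfolding B_def A_def by blast
  define Qp where "Qp j = (\<forall>xs. length xs = j \<and> set xs \<subseteq> N \<longrightarrow> prod_list (map \<delta> xs) \<in> P)" for j
  have surj: "\<sigma> (inv \<sigma> r) = r" for r using sbij by (simp add: bij_is_surj surj_f_inv_f)
  have step: "Qp j \<or> \<delta> ` N \<subseteq> P" if Q1: "Qp (Suc j)" for j
  proof (cases "B \<subseteq> P")
    case True then show ?thesis using dB by blast
  next
    case False
    then have AP: "A \<subseteq> P" using pr[OF tA tB AB] by blast
    have "Qp j" unfolding Qp_def
    proof (intro allI impI)
      fix xs assume xs: "length xs = j \<and> set xs \<subseteq> N"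
      define y where "y = prod_list (map \<delta> xs)"
      have "y \<in> A" unfolding A_def
      proof (intro CollectI ballI allI)
        fix z r assume "z \<in> \<delta> ` N"
        then obtain c where c: "c \<in> N" "z = \<delta> c" by blast
        define r' where "r' = inv \<sigma> r"
        have "\<delta> (r' * c) = \<delta> r' * c + r * \<delta> c" by (simp add: dmult r'_def surj)
        then have eq: "y * r * z = y * \<delta> (r' * c) - y * (\<delta> r' * c)"
          using c by (simp add: algebra_simps)
        have rc: "r' * c \<in> N" using c lid[OF l] by blast
        have "y * \<delta> (r' * c) = prod_list (map \<delta> (xs @ [r' * c]))" by (simp add: y_def)
        also have "\<dots> \<in> P"
        proof -
          have "length (xs @ [r' * c]) = Suc j \<and> set (xs @ [r' * c]) \<subseteq> N" using xs rc by simp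
          then show ?thesis using Q1 unfolding Qp_def by blast
        qed
        finally have 1: "y * \<delta> (r' * c) \<in> P" .
        have "y * (\<delta> r' * c) \<in> N" using c lid[OF l] by blast
        then have 2: "y * (\<delta> r' * c) \<in> P" using NP by blast
        show "y * r * z \<in> P" unfolding eq using 1 2 lid_diff[OF lP] by blast
      qed
      then show "prod_list (map \<delta> xs) \<in> P" using AP y_def by blast
    qed
    then show ?thesis by blast
  qed
  have all: "Qp j \<Longrightarrow> \<delta> ` N \<subseteq> P" for j
  proof (induction j)
    case 0
    then have "1 \<in> P" unfolding Qp_def by (metis empty_subsetI list.map(1) list.set(1) list.size(3) prod_list.Nil)
    then have "P = UNIV" using lid[OF lP] by (metis UNIV_eq_I mult.right_neutral)
    then show ?case using PU by blast
  next
    case (Suc j) then show ?case using step by blast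
  qed
  have "Qp n" unfolding Qp_def
  proof (intro allI impI)
    fix xs assume "length xs = n \<and> set xs \<subseteq> N"
    then have "prod_list (map \<delta> xs) \<in> image_power \<delta> N n" unfolding image_power_def
      by (auto intro!: add_closure.elem)
    then show "prod_list (map \<delta> xs) \<in> P" using IP NP by blast
  qed
  then show ?thesis using all by blast
qed

end

theorem proposition3p1p2:
  fixes q :: "'a::ring_1" and \<sigma> \<delta> :: "'a \<Rightarrow> 'a" and N :: "'a set" and n :: nat
  assumes "noetherian_ring TYPE('a)"
    and "ring_unit q" and "central q"
    and "q_skew_derivation q \<sigma> \<delta>"
    and "sigma_ideal \<sigma> N"
    and "n > 0"
    and "\<forall>x \<in> ideal_power N n. (\<delta> ^^ n) x = 0"
    and "ring_unit (q_factorial q n)"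
  shows "image_power \<delta> N n \<subseteq> N \<and> (N = prime_radical \<longrightarrow> \<delta> ` N \<subseteq> N)"
proof -
  interpret Q: qsd q \<sigma> \<delta>
  proof unfold_locales
  qed (use assms(3,4) in \<open>auto simp: q_skew_derivation_def skew_derivation_def ring_automorphism_def central_def\<close>)
  have N: "two_sided_ideal N" and sN: "\<sigma> ` N \<subseteq> N" using assms(5) unfolding sigma_ideal_def by blast+
  have on: "\<forall>t\<in>N. \<exists>x\<in>N. \<sigma> x = t" using Q.sigma_onto[OF assms(1) tid_l[OF N] sN] by blast
  have IP: "image_power \<delta> N n \<subseteq> N" using Q.image_part[OF N sN on assms(7) assms(8)] .
  have "\<delta> ` N \<subseteq> N" if NR: "N = prime_radical"
  proof
    fix y assume "y \<in> \<delta> ` N"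
    have "y \<in> P" if P: "prime_ideal P" for P
    proof -
      have "N \<subseteq> P" using NR P unfolding prime_radical_def by blast
      then show ?thesis using Q.prime_part[OF N IP P] \<open>y \<in> \<delta> ` N\<close> by blast
    qed
    then show "y \<in> N" using NR unfolding prime_radical_def by blast
  qed
  then show ?thesis using IP by blast
qed

end
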